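(* Let $\tilde{\bm C}_n,\tilde{\bm C}_{n+1}$ be symmetric positive-definite tensors, $\Delta t_n>0$, and $\bm\Gamma^1_n,\dots,\bm\Gamma^m_n$ symmetric tensors. For $\alpha=1,\dots,m$ define $$\bm\Gamma^\alpha_{n+1}:=\frac{\Delta t_n}{\eta^\alpha+\mu^\alpha\Delta t_n/2}\left(\frac{\tilde{\bm S}^\alpha_{\mathrm{iso}}(\tilde{\bm C}_{n+1})+\tilde{\bm S}^\alpha_{\mathrm{iso}}(\tilde{\bm C}_{n})}{2}-\hat{\bm S}^\alpha_0-\Big(\frac{\mu^\alpha}{2}-\frac{\eta^\alpha}{\Delta t_n}\Big)\bm\Gamma^\alpha_n+\mu^\alpha\bm I\right)$$ and $\bm\Gamma^\alpha_{n+\frac12}:=\frac12(\bm\Gamma^\alpha_n+\bm\Gamma^\alpha_{n+1})$. Then $$G_{\mathrm{iso}}(\tilde{\bm C}_{n+1},\bm\Gamma^1_{n+1},\dots,\bm\Gamma^m_{n+1})-G_{\mathrm{iso}}(\tilde{\bm C}_{n+1},\bm\Gamma^1_{n+\frac12},\dots,\bm\Gamma^m_{n+\frac12})+G_{\mathrm{iso}}(\tilde{\bm C}_{n},\bm\Gamma^1_{n+\frac12},\dots,\bm\Gamma^m_{n+\frac12})-G_{\mathrm{iso}}(\tilde{\bm C}_{n},\bm\Gamma^1_{n},\dots,\bm\Gamma^m_{n})=-\frac12\Delta t_n\sum_{\alpha=1}^m\eta^\alpha\left|\frac{\bm\Gamma^\alpha_{n+1}-\bm\Gamma^\alpha_n}{\Delta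 t_n}\right|^2.$$
   Context: $|\bm A|=(\bm A:\bm A)^{1/2}$; $\bm I$ the identity tensor. Fix $m\ge1$; for each $\alpha$: $\mu^\alpha>0$, $\eta^\alpha>0$, constant symmetric tensor $\hat{\bm S}^\alpha_0$, smooth scalar function $G^\alpha$ on symmetric positive-definite tensors with $\tilde{\bm S}^\alpha_{\mathrm{iso}}(\tilde{\bm C}):=2\partial G^\alpha/\partial\tilde{\bm C}$; $G^\infty_{\mathrm{iso}}$ a smooth scalar function. $\Upsilon^\alpha(\tilde{\bm C},\bm\Gamma):=\frac{1}{4\mu^\alpha}|\tilde{\bm S}^\alpha_{\mathrm{iso}}(\tilde{\bm C})-\hat{\bm S}^\alpha_0-\mu^\alpha(\bm\Gamma-\bm I)|^2$ and $G_{\mathrm{iso}}(\tilde{\bm C},\bm\Gamma^1,\dots,\bm\Gamma^m):=G^\infty_{\mathrm{iso}}(\tilde{\bm C})+\sum_{\alpha=1}^m\Upsilon^\alpha(\tilde{\bm C},\bm\Gamma^\alpha)$. *)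

theory Defs
  imports "HOL-Analysis.Analysis"
begin

type_synonym tensor = "real^3^3"

definition ddot :: "tensor \<Rightarrow> tensor \<Rightarrow> real" where
  "ddot A B = (\<Sum>i\<in>UNIV. \<Sum>j\<in>UNIV. A$i$j * B$i$j)"

definition tnorm :: "tensor \<Rightarrow> real" where
  "tnorm A = sqrt (ddot A A)"

definition sym_tensor :: "tensor \<Rightarrow> bool" where
  "sym_tensor A \<longleftrightarrow> transpose A = A"

definition spd_tensor :: "tensor \<Rightarrow> bool" where
  "spd_tensor A \<longleftrightarrow> sym_tensor A \<and> (\<forall>x::real^3. x \<noteq> 0 \<longrightarrow> x \<bullet> (A *v x) > 0)"

text \<open>Upsilon^alpha(C, Gamma), with S = tilde S^alpha_iso, S0 = hat S^alpha_0, mu = mu^alpha.\<close>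
definition Upsilon :: "real \<Rightarrow> (tensor \<Rightarrow> tensor) \<Rightarrow> tensor \<Rightarrow> tensor \<Rightarrow> tensor \<Rightarrow> real" where
  "Upsilon mu S S0 C \<Gamma> = 1 / (4 * mu) * (tnorm (S C - S0 - mu *\<^sub>R (\<Gamma> - mat 1)))\<^sup>2"

definition G_iso :: "nat \<Rightarrow> (tensor \<Rightarrow> real) \<Rightarrow> (nat \<Rightarrow> real) \<Rightarrow> (nat \<Rightarrow> tensor \<Rightarrow> tensor)
     \<Rightarrow> (nat \<Rightarrow> tensor) \<Rightarrow> tensor \<Rightarrow> (nat \<Rightarrow> tensor) \<Rightarrow> real" where
  "G_iso m Ginf mu S S0 C \<Gamma> = Ginf C + (\<Sum>\<alpha>=1..m. Upsilon (mu \<alpha>) (S \<alpha>) (S0 \<alpha>) C (\<Gamma> \<alpha>))"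

end

theory Submission
  imports Defs
begin

lemma ddot_inner: "ddot A B = inner A B"
  by (simp add: ddot_def inner_vec_def)

lemma tnorm_norm: "tnorm A = norm A"
  by (simp add: tnorm_def ddot_inner norm_eq_sqrt_inner)

lemma key:
  fixes X0 X1 G0 G1 :: "'a::real_inner"
  assumes mu: "mu > 0" and dt: "dt > 0"
    and eq: "(eta/dt) *\<^sub>R (G1-G0) + (mu/2) *\<^sub>R (G1+G0) = (1/2) *\<^sub>R (X1+X0)"
  shows "1/(4*mu) * (norm (X1 - mu *\<^sub>R G1))\<^sup>2 - 1/(4*mu) * (norm (X1 - mu *\<^sub>R ((1/2) *\<^sub>R (G0+G1))))\<^sup>2
       + 1/(4*mu) * (norm (X0 - mu *\<^sub>R ((1/2) *\<^sub>R (G0+G1))))\<^sup>2 - 1/(4*mu) * (norm (X0 - mu *\<^sub>R G0))\<^sup>2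
       = - (1/2) * dt * (eta * (norm ((1/dt) *\<^sub>R (G1 - G0)))\<^sup>2)"
proof -
  have L: "1/(4*mu) * (norm (X1 - mu *\<^sub>R G1))\<^sup>2 - 1/(4*mu) * (norm (X1 - mu *\<^sub>R ((1/2) *\<^sub>R (G0+G1))))\<^sup>2
       + 1/(4*mu) * (norm (X0 - mu *\<^sub>R ((1/2) *\<^sub>R (G0+G1))))\<^sup>2 - 1/(4*mu) * (norm (X0 - mu *\<^sub>R G0))\<^sup>2
       = (1/4) * inner (mu *\<^sub>R (G1+G0) - (X1+X0)) (G1-G0)"
    using mu by (simp add: power2_norm_eq_inner inner_simps inner_commute field_simps)
  have "mu *\<^sub>R (G1+G0) - (X1+X0) = - (2*eta/dt) *\<^sub>R (G1-G0)"
  proof -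
    have "X1 + X0 = 2 *\<^sub>R ((eta/dt) *\<^sub>R (G1-G0) + (mu/2) *\<^sub>R (G1+G0))" using eq by simp
    then show ?thesis by (simp add: algebra_simps)
  qed
  then have "(1/4) * inner (mu *\<^sub>R (G1+G0) - (X1+X0)) (G1-G0) = - (eta/(2*dt)) * inner (G1-G0) (G1-G0)"
    by simp
  also have "\<dots> = - (1/2) * dt * (eta * (norm ((1/dt) *\<^sub>R (G1 - G0)))\<^sup>2)"
  proof -
    define n where "n = norm ((1/dt) *\<^sub>R (G1 - G0))"
    have "n = norm (G1-G0) / dt" using dt unfolding n_def by simp
    then have "inner (G1-G0) (G1-G0) = (dt*n)^2" using dt by (simp add: power2_norm_eq_inner[symmetric])
    then show ?thesis using dt unfolding n_def[symmetric] by (simp add: field_simps power2_eq_square)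
  qed
  finally show ?thesis using L by simp
qed
lemma half_aux:
  fixes a b s c :: "'a::real_vector"
  shows "(1/2) *\<^sub>R ((a - s + c) + (b - s + c)) = (1/2) *\<^sub>R (a + b) - s + c"
proof -
  have h: "(a - s + c) + (b - s + c) = (a + b) + 2 *\<^sub>R (c - s)"
    by (simp add: scaleR_2 algebra_simps)
  have h2: "(1/2) *\<^sub>R ((a + b) + 2 *\<^sub>R (c - s)) = (1/2) *\<^sub>R (a + b) + (c - s)"
    by (simp only: scaleR_add_right scaleR_scaleR) simp
  show ?thesis unfolding h h2 by (simp add: algebra_simps)
qed

theorem lemma4:
  fixes m :: nat and mu eta :: "nat \<Rightarrow> real" and S0 :: "nat \<Rightarrow> tensor"
    and G :: "nat \<Rightarrow> tensor \<Rightarrow> real" and S :: "nat \<Rightarrow> tensor \<Rightarrow> tensor"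
    and Ginf :: "tensor \<Rightarrow> real"
    and Cn Cn1 :: tensor and dt :: real and \<Gamma>n :: "nat \<Rightarrow> tensor"
  assumes "m \<ge> 1"
    and "\<forall>\<alpha>\<in>{1..m}. mu \<alpha> > 0 \<and> eta \<alpha> > 0 \<and> sym_tensor (S0 \<alpha>)"
    and "\<forall>\<alpha>\<in>{1..m}. \<forall>C. spd_tensor C \<longrightarrow>
           sym_tensor (S \<alpha> C) \<and>
           (G \<alpha> has_derivative (\<lambda>H. ddot (S \<alpha> C) H / 2)) (at C within {A. sym_tensor A})"
    and "spd_tensor Cn" and "spd_tensor Cn1" and "dt > 0"
    and "\<forall>\<alpha>\<in>{1..m}. sym_tensor (\<Gamma>n \<alpha>)"
  shows "let \<Gamma>n1 = (\<lambda>\<alpha>. (dt / (eta \<alpha> + mu \<alpha> * dt / 2)) *\<^sub>R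
                 ((1/2) *\<^sub>R (S \<alpha> Cn1 + S \<alpha> Cn) - S0 \<alpha>
                  - (mu \<alpha> / 2 - eta \<alpha> / dt) *\<^sub>R \<Gamma>n \<alpha> + mu \<alpha> *\<^sub>R mat 1));
             \<Gamma>h = (\<lambda>\<alpha>. (1/2) *\<^sub>R (\<Gamma>n \<alpha> + \<Gamma>n1 \<alpha>))
         in G_iso m Ginf mu S S0 Cn1 \<Gamma>n1 - G_iso m Ginf mu S S0 Cn1 \<Gamma>h
            + G_iso m Ginf mu S S0 Cn \<Gamma>h - G_iso m Ginf mu S S0 Cn \<Gamma>n
            = - (1/2) * dt * (\<Sum>\<alpha>=1..m. eta \<alpha> * (tnorm ((1/dt) *\<^sub>R (\<Gamma>n1 \<alpha> - \<Gamma>n \<alpha>)))\<^sup>2)"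
  proof -
  define Y where "Y = (\<lambda>\<alpha>. (1/2) *\<^sub>R (S \<alpha> Cn1 + S \<alpha> Cn) - S0 \<alpha>
                  - (mu \<alpha> / 2 - eta \<alpha> / dt) *\<^sub>R \<Gamma>n \<alpha> + mu \<alpha> *\<^sub>R mat 1)"
  define G1 where "G1 = (\<lambda>\<alpha>. (dt / (eta \<alpha> + mu \<alpha> * dt / 2)) *\<^sub>R Y \<alpha>)"
  have per: "Upsilon (mu a) (S a) (S0 a) Cn1 (G1 a) - Upsilon (mu a) (S a) (S0 a) Cn1 ((1/2) *\<^sub>R (\<Gamma>n a + G1 a))
      + Upsilon (mu a) (S a) (S0 a) Cn ((1/2) *\<^sub>R (\<Gamma>n a + G1 a)) - Upsilon (mu a) (S a) (S0 a) Cn (\<Gamma>n a)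
      = - (1/2) * dt * (eta a * (tnorm ((1/dt) *\<^sub>R (G1 a - \<Gamma>n a)))\<^sup>2)"
    if a: "a \<in> {1..m}" for a
  proof -
    have mu: "mu a > 0" and et: "eta a > 0" using assms(2) a by auto
    have dt: "dt > 0" by (rule assms(6))
    have pos: "eta a + mu a * dt / 2 > 0" using mu et dt by (simp add: add_pos_pos)
    have rw: "\<And>C \<Gamma>. S a C - S0 a - mu a *\<^sub>R (\<Gamma> - mat 1) = (S a C - S0 a + mu a *\<^sub>R mat 1) - mu a *\<^sub>R \<Gamma>"
      by (simp add: algebra_simps)
    have G1e: "(eta a/dt + mu a/2) *\<^sub>R G1 a = Y a"
    proof -
      have "(eta a/dt + mu a/2) * (dt / (eta a + mu a * dt / 2)) = 1"
      proof -
        have "eta a/dt + mu a/2 = (eta a + mu a * dt / 2)/dt" using dt by (simp add: field_simps)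
        then show ?thesis using pos dt by simp
      qed
      then show ?thesis unfolding G1_def scaleR_scaleR by (simp only: scaleR_one)
    qed
    have eq: "(eta a/dt) *\<^sub>R (G1 a-\<Gamma>n a) + (mu a/2) *\<^sub>R (G1 a+\<Gamma>n a)
        = (1/2) *\<^sub>R ((S a Cn1 - S0 a + mu a *\<^sub>R mat 1)+(S a Cn - S0 a + mu a *\<^sub>R mat 1))"
    proof -
      have "(eta a/dt) *\<^sub>R (G1 a-\<Gamma>n a) + (mu a/2) *\<^sub>R (G1 a+\<Gamma>n a)
           = (eta a/dt + mu a/2) *\<^sub>R G1 a + (mu a/2 - eta a/dt) *\<^sub>R \<Gamma>n a"
        by (simp add: algebra_simps)
      also have "\<dots> = Y a + (mu a/2 - eta a/dt) *\<^sub>R \<Gamma>n a" using G1e by simp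
      finally show ?thesis unfolding Y_def half_aux by (simp add: algebra_simps)
    qed
    show ?thesis
      unfolding Upsilon_def rw tnorm_norm
      using key[OF mu dt eq] by (simp add: add.commute)
  qed
  have sc: "(\<Sum>a=1..m. Upsilon (mu a) (S a) (S0 a) Cn1 (G1 a) - Upsilon (mu a) (S a) (S0 a) Cn1 ((1/2) *\<^sub>R (\<Gamma>n a + G1 a))
      + Upsilon (mu a) (S a) (S0 a) Cn ((1/2) *\<^sub>R (\<Gamma>n a + G1 a)) - Upsilon (mu a) (S a) (S0 a) Cn (\<Gamma>n a))
      = (\<Sum>a=1..m. - (1/2) * dt * (eta a * (tnorm ((1/dt) *\<^sub>R (G1 a - \<Gamma>n a)))\<^sup>2))"
    by (rule sum.cong[OF refl per])
  have G1u: "(\<lambda>\<alpha>. (dt / (eta \<alpha> + mu \<alpha> * dt / 2)) *\<^sub>R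
                 ((1/2) *\<^sub>R (S \<alpha> Cn1 + S \<alpha> Cn) - S0 \<alpha>
                  - (mu \<alpha> / 2 - eta \<alpha> / dt) *\<^sub>R \<Gamma>n \<alpha> + mu \<alpha> *\<^sub>R mat 1)) = G1"
    unfolding G1_def Y_def ..
  let ?A = "\<lambda>a. Upsilon (mu a) (S a) (S0 a) Cn1 (G1 a)"
  let ?B = "\<lambda>a. Upsilon (mu a) (S a) (S0 a) Cn1 ((1/2) *\<^sub>R (\<Gamma>n a + G1 a))"
  let ?C = "\<lambda>a. Upsilon (mu a) (S a) (S0 a) Cn ((1/2) *\<^sub>R (\<Gamma>n a + G1 a))"
  let ?D = "\<lambda>a. Upsilon (mu a) (S a) (S0 a) Cn (\<Gamma>n a)"
  let ?f = "\<lambda>a. eta a * (tnorm ((1/dt) *\<^sub>R (G1 a - \<Gamma>n a)))\<^sup>2"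
  have e1: "(\<Sum>a=1..m. ?A a - ?B a + ?C a - ?D a) = sum ?A {1..m} - sum ?B {1..m} + sum ?C {1..m} - sum ?D {1..m}"
    by (simp add: sum_subtractf sum.distrib)
  have e2: "(\<Sum>a=1..m. - (1/2) * dt * ?f a) = - (1/2) * dt * sum ?f {1..m}"
    by (rule sum_distrib_left[symmetric])
  show ?thesis
    unfolding Let_def G1u G_iso_def
    using sc e1 e2 by linarith
qed

end
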